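(* Suppose there is $\theta\in\mathcal I$ with $\nu(\{\overline{\boldsymbol\theta}\in\Sigma:\theta_1=\theta\})>0$ such that for every $i\in[N]$, $f_\theta^{(i)}[\mathbf 0]+\sum_{j\in[N]}f_\theta^{(i)}[\mathbf e_j]<1.$ Then the multitype branching process in random environment $(\mathbf Z_n)$ is strongly regular.
   Context: $N\ge2$, $\mathcal I$ countable, $\Sigma=\mathcal I^{\mathbb N}$, $\nu$ a shift-invariant ergodic probability measure on $\Sigma$ (the law of the environment); $[N]=\{0,\dots,N-1\}$; $\mathbf e_j$ is the $j$-th unit vector and $\mathbf 0$ the zero vector of $\mathbb N_0^N$. For $\theta\in\mathcal I$, $f_\theta^{(i)}(\mathbf s)=\sum_{\mathbf z\in\mathbb N_0^N}f_\theta^{(i)}[\mathbf z]\mathbf s^{\mathbf z}$, $i\in[N]$, are pgfs on $\mathbb N_0^N$. In environment $\overline{\boldsymbol\theta}=(\theta_1,\theta_2,\dots)$, each type-$i$ individual of generation $n-1$ independently produces an offspring vector $\mathbf y$ ($y_j$ type-$j$ children) with probability $f_{\theta_n}^{(i)}[\mathbf y]$; $\mathbf Z_n$ is the sum and $\|\mathbf Z_n\|$ the total number of individuals. The process is strongly regular if there exists $n$ such that $\nu\big(\{\overline{\boldsymbol\theta}:\min_{i\in[N]}P_{\overline{\boldsymbol\theta}}(\|\mathbf Z_n\|>1\mid\mathbf Z_0=\mathbf e_i)>0\}\big)>0$, where $P_{\overline{\boldsymbol\theta}}$ is the law of the process in the fixed environment $\overline{\boldsymbol\theta}$. *)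

theory Defs
  imports "HOL-Probability.Probability"
begin

text \<open>Type vectors in N_0^N are represented as functions nat => nat (only the
coordinates 0..N-1 are relevant).  An environment is a sequence th :: nat => 'i,
where th k is the (k+1)-st environment theta_(k+1).  The offspring law of a
type-i individual in environment theta is a pmf f theta i on vectors.\<close>

definition unit_vec :: "nat \<Rightarrow> nat \<Rightarrow> nat" where
  "unit_vec j = (\<lambda>k. if k = j then 1 else 0)"

definition vnorm :: "nat \<Rightarrow> (nat \<Rightarrow> nat) \<Rightarrow> nat" where
  "vnorm N z = (\<Sum>j<N. z j)"

fun iid_sum :: "(nat \<Rightarrow> nat) pmf \<Rightarrow> nat \<Rightarrow> (nat \<Rightarrow> nat) pmf" where
  "iid_sum p 0 = return_pmf (\<lambda>_. 0)"
| "iid_sum p (Suc k) = bind_pmf p (\<lambda>y. map_pmf (\<lambda>s. (\<lambda>j. y j + s j)) (iid_sum p k))"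

fun children :: "(nat \<Rightarrow> (nat \<Rightarrow> nat) pmf) \<Rightarrow> nat \<Rightarrow> (nat \<Rightarrow> nat) \<Rightarrow> (nat \<Rightarrow> nat) pmf" where
  "children p 0 z = return_pmf (\<lambda>_. 0)"
| "children p (Suc m) z = bind_pmf (children p m z)
      (\<lambda>s. map_pmf (\<lambda>y. (\<lambda>j. s j + y j)) (iid_sum (p m) (z m)))"

fun Zlaw :: "('i \<Rightarrow> nat \<Rightarrow> (nat \<Rightarrow> nat) pmf) \<Rightarrow> nat \<Rightarrow> (nat \<Rightarrow> 'i) \<Rightarrow> (nat \<Rightarrow> nat) \<Rightarrow> nat
             \<Rightarrow> (nat \<Rightarrow> nat) pmf" where
  "Zlaw f N th z0 0 = return_pmf z0"
| "Zlaw f N th z0 (Suc n) = bind_pmf (Zlaw f N th z0 n) (\<lambda>z. children (f (th n)) N z)"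

definition env_space :: "(nat \<Rightarrow> 'i) measure" where
  "env_space = PiM UNIV (\<lambda>_. count_space UNIV)"

definition shift :: "(nat \<Rightarrow> 'i) \<Rightarrow> nat \<Rightarrow> 'i" where
  "shift th = (\<lambda>n. th (Suc n))"

definition shift_invariant_ergodic :: "(nat \<Rightarrow> 'i) measure \<Rightarrow> bool" where
  "shift_invariant_ergodic \<nu> \<longleftrightarrow>
     prob_space \<nu> \<and> sets \<nu> = sets env_space \<and>
     shift \<in> \<nu> \<rightarrow>\<^sub>M \<nu> \<and>
     (\<forall>A\<in>sets \<nu>. emeasure \<nu> (shift -` A \<inter> space \<nu>) = emeasure \<nu> A) \<and>
     (\<forall>A\<in>sets \<nu>. shift -` A \<inter> space \<nu> = A \<longrightarrow> emeasure \<nu> A = 0 \<or> emeasure \<nu> A = 1)"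

definition strongly_regular ::
  "('i \<Rightarrow> nat \<Rightarrow> (nat \<Rightarrow> nat) pmf) \<Rightarrow> nat \<Rightarrow> (nat \<Rightarrow> 'i) measure \<Rightarrow> bool" where
  "strongly_regular f N \<nu> \<longleftrightarrow>
     (\<exists>n. emeasure \<nu> {th \<in> space \<nu>.
        (MIN i\<in>{..<N}. measure_pmf.prob (Zlaw f N th (unit_vec i) n) {z. vnorm N z > 1}) > 0} > 0)"

end

theory Submission
  imports Defs
begin

lemma children_unit: "children p m (unit_vec i) = (if i < m then p i else return_pmf (\<lambda>_. 0))"
proof (induction m)
  case 0 then show ?case by simp
next
  case (Suc m)
  show ?case
  proof (cases "m = i")
    case True
    then show ?thesis using Suc by (simp add: unit_vec_def map_pmf_def bind_return_pmf bind_return_pmf' pmf.map_id0)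
  next
    case False
    then show ?thesis using Suc by (auto simp add: unit_vec_def map_pmf_def bind_return_pmf bind_return_pmf')
  qed
qed

lemma Zlaw_one: "i < N \<Longrightarrow> Zlaw f N th (unit_vec i) 1 = f (th 0) i"
  by (simp add: bind_return_pmf children_unit)

lemma pos_prob:
  fixes p :: "(nat \<Rightarrow> nat) pmf"
  assumes supp: "\<And>y k. y \<in> set_pmf p \<Longrightarrow> k \<ge> N \<Longrightarrow> y k = 0"
    and lt: "pmf p (\<lambda>_. 0) + (\<Sum>j<N. pmf p (unit_vec j)) < 1"
  shows "measure_pmf.prob p {z. vnorm N z > 1} > 0"
proof (rule ccontr)
  assume "\<not> ?thesis"
  hence z: "measure_pmf.prob p {z. vnorm N z > 1} = 0"
    by (simp add: not_less measure_nonneg order.antisym)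
  define S where "S = insert (\<lambda>_::nat. 0::nat) (unit_vec ` {..<N})"
  have sub: "set_pmf p \<subseteq> S"
  proof
    fix y assume y: "y \<in> set_pmf p"
    have "y \<notin> {z. vnorm N z > 1}"
    proof
      assume "y \<in> {z. vnorm N z > 1}"
      hence "pmf p y > 0" using y by (simp add: pmf_positive)
      moreover have "pmf p y \<le> measure_pmf.prob p {z. vnorm N z > 1}"
        using \<open>y \<in> {z. vnorm N z > 1}\<close> by (simp add: measure_pmf_single[symmetric] measure_pmf.finite_measure_mono)
      ultimately show False using z by simp
    qed
    hence le: "(\<Sum>j<N. y j) \<le> 1" by (simp add: vnorm_def)
    show "y \<in> S"
    proof (cases "\<exists>j<N. y j \<noteq> 0")
      case False
      hence "y = (\<lambda>_. 0)"
        using supp[OF y] by (metis not_le ext)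
      thus ?thesis by (simp add: S_def)
    next
      case True
      then obtain j where j: "j < N" "y j \<noteq> 0" by blast
      have "y j + (\<Sum>k\<in>{..<N}-{j}. y k) = (\<Sum>k<N. y k)"
        using j(1) by (simp add: sum.remove)
      hence yj: "y j = 1" and rest: "(\<Sum>k\<in>{..<N}-{j}. y k) = 0" using le j(2) by linarith+
      have "y = unit_vec j"
      proof
        fix k show "y k = unit_vec j k"
        proof (cases "k = j")
          case True thus ?thesis using yj by (simp add: unit_vec_def)
        next
          case False
          show ?thesis
          proof (cases "k < N")
            case True
            thus ?thesis using rest False by (simp add: unit_vec_def)
          next
            case nf: False
            thus ?thesis using supp[OF y, of k] False by (simp add: unit_vec_def)
          qed
        qed
      qed
      thus ?thesis using j(1) by (simp add: S_def)
    qed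
  qed
  have "measure_pmf.prob p S = 1"
    using sub by (simp add: measure_pmf.prob_eq_1 AE_measure_pmf_iff subsetD)
  moreover have "measure_pmf.prob p S = pmf p (\<lambda>_. 0) + (\<Sum>j<N. pmf p (unit_vec j))"
  proof -
    have inj: "inj_on unit_vec {..<N}"
      by (rule inj_onI) (metis unit_vec_def zero_neq_one)
    have nz: "(\<lambda>_. 0) \<notin> unit_vec ` {..<N}"
      by (auto simp: unit_vec_def fun_eq_iff) (metis zero_neq_one)
    have "measure_pmf.prob p S = (\<Sum>x\<in>S. pmf p x)"
      by (simp add: S_def measure_measure_pmf_finite)
    also have "\<dots> = pmf p (\<lambda>_. 0) + (\<Sum>x\<in>unit_vec ` {..<N}. pmf p x)"
      using nz by (simp add: S_def)
    also have "\<dots> = pmf p (\<lambda>_. 0) + (\<Sum>j<N. pmf p (unit_vec j))"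
      using inj by (simp add: sum.reindex)
    finally show ?thesis .
  qed
  ultimately show False using lt by simp
qed

theorem fact4p7:
  fixes f :: "'i::countable \<Rightarrow> nat \<Rightarrow> (nat \<Rightarrow> nat) pmf"
    and N :: nat and \<nu> :: "(nat \<Rightarrow> 'i) measure" and \<theta> :: 'i
  assumes "N \<ge> 2"
    and "\<And>t i y k. y \<in> set_pmf (f t i) \<Longrightarrow> k \<ge> N \<Longrightarrow> y k = 0"
    and "shift_invariant_ergodic \<nu>"
    and "emeasure \<nu> {th \<in> space \<nu>. th 0 = \<theta>} > 0"
    and "\<And>i. i < N \<Longrightarrow> pmf (f \<theta> i) (\<lambda>_. 0) + (\<Sum>j<N. pmf (f \<theta> i) (unit_vec j)) < 1"
  shows "strongly_regular f N \<nu>"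
proof -
  define P where "P = (\<lambda>t. (MIN i\<in>{..<N}. measure_pmf.prob (f t i) {z. vnorm N z > 1}) > 0)"
  have eq: "{th \<in> space \<nu>. (MIN i\<in>{..<N}. measure_pmf.prob (Zlaw f N th (unit_vec i) 1) {z. vnorm N z > 1}) > 0}
      = {th \<in> space \<nu>. th 0 \<in> {t. P t}}"
  proof -
    have "\<And>th. (MIN i\<in>{..<N}. measure_pmf.prob (Zlaw f N th (unit_vec i) 1) {z. vnorm N z > 1})
         = (MIN i\<in>{..<N}. measure_pmf.prob (f (th 0) i) {z. vnorm N z > 1})"
      by (intro arg_cong[where f=Min] image_cong) (auto simp: bind_return_pmf children_unit)
    thus ?thesis by (simp add: P_def)
  qed
  have Pth: "P \<theta>"
  proof -
    have ne: "{..<N} \<noteq> {}" using assms(1) by (metis lessThan_empty_iff not_numeral_le_zero)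
    have "\<forall>a\<in>(\<lambda>i. measure_pmf.prob (f \<theta> i) {z. vnorm N z > 1}) ` {..<N}. a > 0"
    proof
      fix a assume "a \<in> (\<lambda>i. measure_pmf.prob (f \<theta> i) {z. vnorm N z > 1}) ` {..<N}"
      then obtain i where i: "i < N" and a: "a = measure_pmf.prob (f \<theta> i) {z. vnorm N z > 1}" by auto
      show "a > 0" unfolding a
        by (rule pos_prob[where N=N]) (use assms(2) assms(5)[OF i] in auto)
    qed
    thus ?thesis unfolding P_def using ne by (subst Min_gr_iff) auto
  qed
  have sets: "sets \<nu> = sets env_space" using assms(3) by (simp add: shift_invariant_ergodic_def)
  have meas: "(\<lambda>th. th 0) \<in> measurable \<nu> (count_space UNIV)"
    using measurable_cong_sets[OF sets refl] unfolding env_space_def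
    by (metis measurable_component_singleton UNIV_I)
  have mset: "{th \<in> space \<nu>. th 0 \<in> {t. P t}} \<in> sets \<nu>"
    using measurable_sets[OF meas, of "{t. P t}"] by (simp add: vimage_def Int_def conj_commute)
  have "{th \<in> space \<nu>. th 0 = \<theta>} \<subseteq> {th \<in> space \<nu>. th 0 \<in> {t. P t}}" using Pth by auto
  hence "emeasure \<nu> {th \<in> space \<nu>. th 0 = \<theta>} \<le> emeasure \<nu> {th \<in> space \<nu>. th 0 \<in> {t. P t}}"
    using mset by (rule emeasure_mono)
  hence "emeasure \<nu> {th \<in> space \<nu>. th 0 \<in> {t. P t}} > 0" using assms(4) by simp
  thus ?thesis unfolding strongly_regular_def eq[symmetric] by blast
qed

end
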